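(* Let $(\vec X_1,Y_1),\ldots,(\vec X_n,Y_n),(\vec X_{n+1},Y_{n+1})$ be i.i.d. with $\vec X\in\mathcal X$, $Y\in\mathbb R$, and let $F(y\mid\vec x)$ be the conditional distribution function of $Y$ given $\vec X=\vec x$. For each $n$ let $\widehat F$ be an estimate of $F$ independent of $(\vec X_i,Y_i)_{i\le n+1}$. Fix $\alpha\in(0,1)$ and assume: (A1) there exist sequences $\eta_n=o(1)$ and $\rho_n=o(1)$ such that $\mathbb P\Big(\mathbb E\big[\sup_{y\in\mathbb R}(\widehat F(y\mid\vec X)-F(y\mid\vec X))^2\,\big|\,\widehat F\big]\ge\eta_n\Big)\le\rho_n$, where $(\vec X,Y)$ is an independent copy; (A2) for every $\vec x$, $F(y\mid\vec x)$ is differentiable in $y$, and there exists $M>0$ such that $\inf_{\vec x}\frac{dF(y\mid\vec x)}{dy}\ge M^{-1}$ for $y$ in a neighborhood of $F^{-1}(\alpha/2\mid\vec x)$ and of $F^{-1}(1-\alpha/2\mid\vec x)$. Let $U_i=\widehat F(Y_i\mid\vec X_i)$, $i=1,\ldots,n$, and let $U_{[\beta]}$ denote the empirical $\beta$ quantile of $U_1,\ldots,U_n$. Then $$\widehat F^{-1}(U_{[\alpha/2]}\mid\vec X_{n+1})=F^{-1}(\alpha/2\mid\vec X_{n+1})+o_{\mathbb P}(1),\qquad \widehat F^{-1}(U_{[1-\alpha/2]}\mid\vec X_{n+1})=F^{-1}(1-\alpha/2\mid\vec X_{n+1})+o_{\mathbb P}(1).$$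
   Context: $F^{-1}(\cdot\mid\vec x)$ and $\widehat F^{-1}(\cdot\mid\vec x)$ denote the (generalized) inverses in $y$ of the conditional distribution functions. *)

theory Defs
  imports "HOL-Probability.Probability"
begin

definition is_cdf :: "(real \<Rightarrow> real) \<Rightarrow> bool" where
  "is_cdf G \<longleftrightarrow> mono G \<and> (\<forall>y. continuous (at_right y) G) \<and>
     (G \<longlongrightarrow> 0) at_bot \<and> (G \<longlongrightarrow> 1) at_top"

definition geninv :: "(real \<Rightarrow> real) \<Rightarrow> real \<Rightarrow> real" where
  "geninv G u = Inf {y. u \<le> G y}"

definition emp_quantile :: "(nat \<Rightarrow> real) \<Rightarrow> nat \<Rightarrow> real \<Rightarrow> real" where
  "emp_quantile u n \<beta> = Inf {t. \<beta> \<le> real (card {i. i < n \<and> u i \<le> t}) / real n}"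

text \<open>Outer probability (so that o_P statements make sense without measurability).\<close>
definition outer_prob :: "'a measure \<Rightarrow> 'a set \<Rightarrow> real" where
  "outer_prob M A = Inf {measure M B | B. B \<in> sets M \<and> A \<subseteq> B}"

end

theory Submission
  imports Defs
begin


lemma cdf_le1:
  assumes "is_cdf F" shows "F y \<le> 1"
proof -
  have m: "mono F" and l: "(F \<longlongrightarrow> 1) at_top" using assms by (auto simp: is_cdf_def)
  show ?thesis
  proof (rule tendsto_lowerbound[OF l])
    show "\<forall>\<^sub>F z in at_top. F y \<le> F z" using m by (auto simp: eventually_at_top_linorder mono_def)
  qed simp
qed

lemma cdf_ge0:
  assumes "is_cdf F" shows "0 \<le> F y"
proof -
  have m: "mono F" and l: "(F \<longlongrightarrow> 0) at_bot" using assms by (auto simp: is_cdf_def)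
  show ?thesis
  proof (rule tendsto_upperbound[OF l])
    show "\<forall>\<^sub>F z in at_bot. F z \<le> F y" using m by (auto simp: eventually_at_bot_linorder mono_def)
  qed simp
qed

lemma geninv_le_iff:
  assumes F: "is_cdf F" and u: "0 < u" "u < 1"
  shows "geninv F u \<le> y \<longleftrightarrow> u \<le> F y"
proof -
  have m: "mono F" and rc: "\<And>y. continuous (at_right y) F"
    and l0: "(F \<longlongrightarrow> 0) at_bot" and l1: "(F \<longlongrightarrow> 1) at_top" using F by (auto simp: is_cdf_def)
  define S where "S = {y. u \<le> F y}"
  have "\<forall>\<^sub>F z in at_top. F z > u" using l1 u by (auto intro: order_tendstoD)
  then obtain z where z: "F z > u" by (auto simp: eventually_at_top_linorder)
  have "z \<in> S" using z by (simp add: S_def)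
  then have ne: "S \<noteq> {}" by blast
  have "\<forall>\<^sub>F z in at_bot. F z < u" using l0 u by (auto intro: order_tendstoD)
  then obtain b where b: "\<And>z. z \<le> b \<Longrightarrow> F z < u" by (auto simp: eventually_at_bot_linorder)
  have bdd: "bdd_below S"
  proof (rule bdd_belowI[of _ b])
    fix y assume "y \<in> S" then have "u \<le> F y" by (simp add: S_def)
    then show "b \<le> y" using b[of y] by (cases "y \<le> b") auto
  qed
  have up: "\<And>y. y \<in> S \<Longrightarrow> y \<le> y' \<Longrightarrow> y' \<in> S" for y' using m by (auto simp: S_def mono_def intro: order_trans)
  have inS: "Inf S \<in> S"
  proof -
    have "(F \<longlongrightarrow> F (Inf S)) (at_right (Inf S))" using rc[of "Inf S"] by (simp add: continuous_within)
    moreover have "\<forall>\<^sub>F y in at_right (Inf S). u \<le> F y"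
    proof -
      have "\<forall>y>Inf S. u \<le> F y"
      proof (intro allI impI)
        fix y assume "y > Inf S"
        then obtain s where "s \<in> S" "s < y" using cInf_lessD[OF ne] by blast
        then show "u \<le> F y" using up[of s y] by (auto simp: S_def)
      qed
      then show ?thesis by (auto simp: eventually_at_filter intro!: always_eventually)
    qed
    ultimately have "u \<le> F (Inf S)" by (intro tendsto_lowerbound) auto
    then show ?thesis by (simp add: S_def)
  qed
  show ?thesis
  proof
    assume "geninv F u \<le> y" then show "u \<le> F y" using up[OF inS] by (auto simp: geninv_def S_def)
  next
    assume "u \<le> F y" then show "geninv F u \<le> y" unfolding geninv_def S_def[symmetric]
      by (intro cInf_lower bdd) (auto simp: S_def)
  qed
qed

lemma geninv_cont:
  assumes F: "is_cdf F" and u: "0 < u" "u < 1" and c: "isCont F (geninv F u)"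
  shows "F (geninv F u) = u"
proof -
  let ?q = "geninv F u"
  have ge: "u \<le> F ?q" using geninv_le_iff[OF F u, of ?q] by simp
  have "(F \<longlongrightarrow> F ?q) (at_left ?q)" using c by (simp add: isCont_def filterlim_at_split)
  moreover have "\<forall>\<^sub>F y in at_left ?q. F y \<le> u"
  proof -
    have "\<forall>y<?q. F y \<le> u" using geninv_le_iff[OF F u] by (meson less_le_not_le nle_le)
    then show ?thesis by (auto simp: eventually_at_filter intro!: always_eventually)
  qed
  ultimately have "F ?q \<le> u" by (intro tendsto_upperbound) auto
  with ge show ?thesis by simp
qed

lemma slope_bounds:
  fixes F :: "real \<Rightarrow> real"
  assumes d: "\<forall>y. F differentiable (at y)" and K: "K > 0"
    and sl: "\<forall>y. \<bar>y - q\<bar> < \<delta> \<longrightarrow> deriv F y \<ge> 1/K" and e: "0 < e" "e < \<delta>"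
  shows "F (q+e) - F q \<ge> e/K" "F q - F (q - e) \<ge> e/K"
proof -
  have D: "\<And>x. DERIV F x :> deriv F x" using d DERIV_deriv_iff_real_differentiable by blast
  obtain z where z: "q < z" "z < q + e" "F (q+e) - F q = (q + e - q) * deriv F z"
    using MVT2[of q "q+e" F "deriv F"] D e by auto
  have "deriv F z \<ge> 1/K" using sl z e by auto
  then have "e * deriv F z \<ge> e * (1/K)" using e by (intro mult_left_mono) auto
  then show "F (q+e) - F q \<ge> e/K" using z by simp
  obtain z where z: "q - e < z" "z < q" "F q - F (q - e) = (q - (q - e)) * deriv F z"
    using MVT2[of "q - e" q F "deriv F"] D e by auto
  have "deriv F z \<ge> 1/K" using sl z e by auto
  then have "e * deriv F z \<ge> e * (1/K)" using e by (intro mult_left_mono) auto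
  then show "F q - F (q - e) \<ge> e/K" using z by simp
qed

lemma det_main:
  assumes F: "is_cdf F" and Gc: "is_cdf G" and dif: "\<forall>y. F differentiable (at y)"
   and K: "K > 0" and sl: "\<forall>y. \<bar>y - geninv F \<beta>\<bar> < \<delta> \<longrightarrow> deriv F y \<ge> 1/K"
   and \<beta>: "0 < \<beta>" "\<beta> < 1" and e: "0 < e" "e < \<delta>"
   and dG: "\<forall>y. \<bar>G y - F y\<bar> \<le> d" and us: "\<bar>u - \<beta>\<bar> \<le> s" and ds: "d + s < e/K"
   and sb: "s < \<beta>" "s < 1 - \<beta>"
  shows "\<bar>geninv G u - geninv F \<beta>\<bar> \<le> e"
proof -
  define q where "q = geninv F \<beta>"
  have "isCont F q" using dif differentiable_imp_continuous_within by blast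
  then have Fq: "F q = \<beta>" using geninv_cont[OF F \<beta>] by (simp add: q_def)
  have u: "0 < u" "u < 1" using us sb by auto
  have s1: "F (q+e) - F q \<ge> e/K" "F q - F (q - e) \<ge> e/K"
    using slope_bounds[OF dif K _ e, of q] sl by (auto simp: q_def)
  have "u \<le> G (q+e)" using dG[rule_format, of "q+e"] s1 Fq us ds by auto
  then have up: "geninv G u \<le> q + e" using geninv_le_iff[OF Gc u] by simp
  have "\<not> u \<le> G (q - e)" using dG[rule_format, of "q-e"] s1 Fq us ds by auto
  then have lo: "\<not> geninv G u \<le> q - e" using geninv_le_iff[OF Gc u] by simp
  show ?thesis using up lo by (simp add: q_def[symmetric])
qed

lemma card_le_Un:
  fixes n :: nat
  assumes "\<And>i. i < n \<Longrightarrow> P i \<Longrightarrow> Q i \<or> R i"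
  shows "real (card {i. i < n \<and> P i}) \<le> real (card {i. i < n \<and> Q i}) + real (card {i. i < n \<and> R i})"
proof -
  have "card {i. i < n \<and> P i} \<le> card ({i. i < n \<and> Q i} \<union> {i. i < n \<and> R i})"
    by (rule card_mono) (use assms in auto)
  also have "\<dots> \<le> card {i. i < n \<and> Q i} + card {i. i < n \<and> R i}" by (rule card_Un_le)
  finally show ?thesis by linarith
qed

lemma quantile_bound:
  fixes U V :: "nat \<Rightarrow> real" and n :: nat and \<beta> s :: real and bad Qa Qb :: "nat \<Rightarrow> bool"
  assumes n: "n > 0" and s: "s > 0" and U0: "\<forall>i<n. 0 \<le> U i" and \<beta>: "\<beta> > 0"
    and good: "\<forall>i<n. \<not> bad i \<longrightarrow> \<bar>U i - V i\<bar> < s/2"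
    and A1: "\<forall>i<n. Qa i \<longrightarrow> V i \<le> \<beta> + s/2"
    and A2: "\<forall>i<n. V i < \<beta> - s/4 \<longrightarrow> Qb i"
    and Nb: "real (card {i. i < n \<and> bad i}) < real n * s / 8"
    and C1: "real (card {i. i < n \<and> Qa i}) > real n * (\<beta> + s/4)"
    and C2: "real (card {i. i < n \<and> Qb i}) < real n * (\<beta> - s/8)"
  shows "\<bar>emp_quantile U n \<beta> - \<beta>\<bar> \<le> s"
proof -
  define T where "T = {t. \<beta> \<le> real (card {i. i < n \<and> U i \<le> t}) / real n}"
  have q: "emp_quantile U n \<beta> = Inf T" by (simp add: emp_quantile_def T_def)
  have npos: "real n > 0" using n by simp
  have inT: "\<beta> + s \<in> T"
  proof -
    have "real (card {i. i < n \<and> Qa i}) \<le> real (card {i. i < n \<and> U i \<le> \<beta> + s}) + real (card {i. i < n \<and> bad i})"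
    proof (rule card_le_Un)
      fix i assume i: "i < n" "Qa i"
      show "U i \<le> \<beta> + s \<or> bad i"
      proof (cases "bad i")
        case False
        then have "\<bar>U i - V i\<bar> < s/2" using good i by auto
        moreover have "V i \<le> \<beta> + s/2" using A1 i by auto
        ultimately have "U i \<le> \<beta> + s" by arith
        then show ?thesis by simp
      qed simp
    qed
    then have "real n * \<beta> \<le> real (card {i. i < n \<and> U i \<le> \<beta> + s})"
      using C1 Nb npos s by (simp add: algebra_simps)
    then show ?thesis using npos by (simp add: T_def pos_le_divide_eq mult.commute)
  qed
  have bdd: "bdd_below T"
  proof (rule bdd_belowI[of _ 0])
    fix t assume t: "t \<in> T"
    show "0 \<le> t"
    proof (rule ccontr)
      assume "\<not> 0 \<le> t"
      then have e: "{i. i < n \<and> U i \<le> t} = {}" using U0 by force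
      have "\<beta> \<le> real (card {i. i < n \<and> U i \<le> t}) / real n" using t by (simp add: T_def)
      then show False unfolding e using \<beta> by simp
    qed
  qed
  have up: "Inf T \<le> \<beta> + s" by (rule cInf_lower[OF inT bdd])
  have lo: "\<beta> - s \<le> Inf T"
  proof (rule cInf_greatest)
    show "T \<noteq> {}" using inT by blast
    fix t assume t: "t \<in> T"
    show "\<beta> - s \<le> t"
    proof (rule ccontr)
      assume "\<not> \<beta> - s \<le> t"
      then have tl: "t < \<beta> - s" by simp
      have "real (card {i. i < n \<and> U i \<le> t}) \<le> real (card {i. i < n \<and> Qb i}) + real (card {i. i < n \<and> bad i})"
      proof (rule card_le_Un)
        fix i assume i: "i < n" "U i \<le> t"
        show "Qb i \<or> bad i"
        proof (cases "bad i")
          case False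
          then have "\<bar>U i - V i\<bar> < s/2" using good i by auto
          then have "V i < \<beta> - s/4" using i tl s by arith
          then show ?thesis using A2 i by auto
        qed simp
      qed
      moreover have "real n * \<beta> \<le> real (card {i. i < n \<and> U i \<le> t})"
        using t npos by (simp add: T_def pos_le_divide_eq mult.commute)
      ultimately show False using C2 Nb by (simp add: algebra_simps)
    qed
  qed
  show ?thesis using up lo q by simp
qed




lemma cond_fin:
  fixes h :: "'x \<Rightarrow> real" and Y0 :: "'a \<Rightarrow> real" and F :: "'x \<Rightarrow> real \<Rightarrow> real"
  assumes M: "prob_space M" and X0[measurable]: "X0 \<in> measurable M SX" and Y0[measurable]: "Y0 \<in> borel_measurable M"
   and Fb: "\<forall>x\<in>space SX. \<forall>y. 0 \<le> F x y \<and> F x y \<le> 1" and Fm: "\<forall>y. (\<lambda>x. F x y) \<in> borel_measurable SX"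
   and Fc: "\<forall>A\<in>sets SX. \<forall>y. measure M {\<omega>\<in>space M. X0 \<omega> \<in> A \<and> Y0 \<omega> \<le> y} = (LINT x:A|distr M SX X0. F x y)"
   and h[measurable]: "h \<in> borel_measurable SX" and fin: "finite (h ` space SX)"
  shows "measure M {\<omega>\<in>space M. Y0 \<omega> \<le> h (X0 \<omega>)} = (\<integral>x. F x (h x) \<partial>distr M SX X0)"
proof -
  interpret prob_space M by fact
  define PX where "PX = distr M SX X0"
  interpret PX: prob_space PX unfolding PX_def by (rule prob_space_distr) simp
  have [simp]: "space PX = space SX" by (simp_all add: PX_def)
  have [simp, measurable_cong]: "sets PX = sets SX" by (simp_all add: PX_def)
  define R where "R = h ` space SX"
  define A where "A c = h -` {c} \<inter> space SX" for c
  have Am[measurable]: "A c \<in> sets SX" for c unfolding A_def by (rule measurable_sets[OF h]) (rule borel_closed, simp)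
  define E where "E c = {\<omega>\<in>space M. X0 \<omega> \<in> A c \<and> Y0 \<omega> \<le> c}" for c
  have Em[measurable]: "E c \<in> sets M" for c unfolding E_def by measurable
  have Fm'[measurable]: "(\<lambda>x. F x y) \<in> borel_measurable SX" for y using Fm by blast
  have int: "integrable PX (\<lambda>x. indicator (A c) x * F x c)" for c
  proof (rule PX.integrable_const_bound[where B=1])
    show "(\<lambda>x. indicator (A c) x * F x c) \<in> borel_measurable PX" by measurable
  qed (use Fb in \<open>auto simp: indicator_def\<close>)
  have "measure M {\<omega>\<in>space M. Y0 \<omega> \<le> h (X0 \<omega>)} = (\<integral>\<omega>. indicator {\<omega>\<in>space M. Y0 \<omega> \<le> h (X0 \<omega>)} \<omega> \<partial>M)"
    by (simp add: Int_absorb2 Collect_restrict)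
  also have "\<dots> = (\<integral>\<omega>. (\<Sum>c\<in>R. indicator (E c) \<omega>) \<partial>M)"
  proof (rule Bochner_Integration.integral_cong[OF refl])
    fix \<omega> assume \<omega>: "\<omega> \<in> space M"
    then have xs: "X0 \<omega> \<in> space SX" using measurable_space[OF X0] by blast
    have "(\<Sum>c\<in>R. indicator (E c) \<omega> :: real) = (\<Sum>c\<in>R. if c = h (X0 \<omega>) then indicator {\<omega>\<in>space M. Y0 \<omega> \<le> h (X0 \<omega>)} \<omega> else 0)"
      by (rule sum.cong) (auto simp: E_def A_def indicator_def \<omega> xs)
    also have "\<dots> = indicator {\<omega>\<in>space M. Y0 \<omega> \<le> h (X0 \<omega>)} \<omega>"
      using xs fin by (subst sum.delta) (auto simp: R_def)
    finally show "indicator {\<omega>\<in>space M. Y0 \<omega> \<le> h (X0 \<omega>)} \<omega> = (\<Sum>c\<in>R. indicator (E c) \<omega> :: real)" by simp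
  qed
  also have "\<dots> = (\<Sum>c\<in>R. measure M (E c))"
    proof -
    have "(\<integral>\<omega>. (\<Sum>c\<in>R. indicator (E c) \<omega>) \<partial>M) = (\<Sum>c\<in>R. (\<integral>\<omega>. indicator (E c) \<omega> \<partial>M) :: real)"
      by (rule Bochner_Integration.integral_sum) (auto intro!: integrable_real_indicator simp: less_top[symmetric])
    also have "\<dots> = (\<Sum>c\<in>R. measure M (E c))"
      by (rule sum.cong[OF refl]) (simp add: E_def Int_absorb2 Collect_restrict)
    finally show ?thesis .
  qed
  also have "\<dots> = (\<Sum>c\<in>R. (\<integral>x. indicator (A c) x * F x c \<partial>PX))"
    by (rule sum.cong[OF refl]) (simp add: E_def Fc Am PX_def set_lebesgue_integral_def)
  also have "\<dots> = (\<integral>x. (\<Sum>c\<in>R. indicator (A c) x * F x c) \<partial>PX)"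
    by (subst Bochner_Integration.integral_sum) (auto intro: int)
  also have "\<dots> = (\<integral>x. F x (h x) \<partial>PX)"
  proof (rule Bochner_Integration.integral_cong[OF refl])
    fix x assume x: "x \<in> space PX"
    have "(\<Sum>c\<in>R. indicator (A c) x * F x c) = (\<Sum>c\<in>R. if c = h x then F x c else 0)"
      by (rule sum.cong) (use x in \<open>auto simp: A_def indicator_def\<close>)
    also have "\<dots> = F x (h x)" using x fin by (subst sum.delta) (auto simp: R_def)
    finally show "(\<Sum>c\<in>R. indicator (A c) x * F x c) = F x (h x)" .
  qed
  finally show ?thesis by (simp add: PX_def)
qed

lemma meas_fin:
  fixes h :: "'x \<Rightarrow> real" and F :: "'x \<Rightarrow> real \<Rightarrow> real"
  assumes Fm: "\<forall>y. (\<lambda>x. F x y) \<in> borel_measurable SX"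
   and h[measurable]: "h \<in> borel_measurable SX" and fin: "finite (h ` space SX)"
  shows "(\<lambda>x. F x (h x)) \<in> borel_measurable SX"
proof -
  define R where "R = h ` space SX"
  define A where "A c = h -` {c} \<inter> space SX" for c
  have Am[measurable]: "A c \<in> sets SX" for c unfolding A_def by (rule measurable_sets[OF h]) (rule borel_closed, simp)
  have Fm'[measurable]: "(\<lambda>x. F x y) \<in> borel_measurable SX" for y using Fm by blast
  have "(\<lambda>x. (\<Sum>c\<in>R. indicator (A c) x * F x c)) \<in> borel_measurable SX" by measurable
  moreover have "(\<Sum>c\<in>R. indicator (A c) x * F x c) = F x (h x)" if x: "x \<in> space SX" for x
  proof -
    have "(\<Sum>c\<in>R. indicator (A c) x * F x c) = (\<Sum>c\<in>R. if c = h x then F x c else 0)"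
      by (rule sum.cong) (use x in \<open>auto simp: A_def indicator_def\<close>)
    also have "\<dots> = F x (h x)" using x fin by (subst sum.delta) (auto simp: R_def)
    finally show ?thesis .
  qed
  ultimately show ?thesis by (simp cong: measurable_cong)
qed

lemma cond_gen:
  fixes h :: "'x \<Rightarrow> real" and Y0 :: "'a \<Rightarrow> real" and F :: "'x \<Rightarrow> real \<Rightarrow> real"
  assumes M: "prob_space M" and X0[measurable]: "X0 \<in> measurable M SX" and Y0[measurable]: "Y0 \<in> borel_measurable M"
   and Fb: "\<forall>x\<in>space SX. \<forall>y. 0 \<le> F x y \<and> F x y \<le> 1" and Fm: "\<forall>y. (\<lambda>x. F x y) \<in> borel_measurable SX"
   and Fc: "\<forall>A\<in>sets SX. \<forall>y. measure M {\<omega>\<in>space M. X0 \<omega> \<in> A \<and> Y0 \<omega> \<le> y} = (LINT x:A|distr M SX X0. F x y)"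
   and Fcont: "\<forall>x\<in>space SX. \<forall>y. isCont (F x) y"
   and h[measurable]: "h \<in> borel_measurable SX"
  shows "measure M {\<omega>\<in>space M. Y0 \<omega> \<le> h (X0 \<omega>)} = (\<integral>x. F x (h x) \<partial>distr M SX X0)"
proof -
  interpret prob_space M by fact
  define PX where "PX = distr M SX X0"
  interpret PX: prob_space PX unfolding PX_def by (rule prob_space_distr) simp
  have [simp]: "space PX = space SX" by (simp_all add: PX_def)
  have [simp, measurable_cong]: "sets PX = sets SX" by (simp_all add: PX_def)
  define hm where "hm m x = real_of_int (max (-(int m * 2^m)) (min (int m * 2^m) \<lceil>2^m * h x\<rceil>)) / 2^m" for m x
  have hm_meas[measurable]: "hm m \<in> borel_measurable SX" for m
  proof -
    have 1: "(\<lambda>x. \<lceil>2^m * h x\<rceil>) \<in> measurable SX (count_space UNIV)"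
      by (rule measurable_compose[OF _ measurable_real_ceiling]) simp
    have 2: "(\<lambda>k. real_of_int (max (-(int m * 2^m)) (min (int m * 2^m) k)) / 2^m) \<in> measurable (count_space UNIV) borel" by simp
    show ?thesis using measurable_compose[OF 1 2] by (simp add: hm_def[abs_def])
  qed
  have hm_fin: "finite (hm m ` space SX)" for m
  proof (rule finite_subset)
    show "hm m ` space SX \<subseteq> (\<lambda>k. real_of_int k / 2^m) ` {-(int m * 2^m)..int m * 2^m}"
    proof
      fix v assume "v \<in> hm m ` space SX"
      then obtain x where v: "v = hm m x" by blast
      define k where "k = max (-(int m * 2^m)) (min (int m * 2^m) \<lceil>2^m * h x\<rceil>)"
      have "v = real_of_int k / 2^m" "k \<in> {-(int m * 2^m)..int m * 2^m}"
        unfolding v hm_def k_def by simp_all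
      then show "v \<in> (\<lambda>k. real_of_int k / 2^m) ` {-(int m * 2^m)..int m * 2^m}" by blast
    qed
  qed auto
  have hm_eq: "hm m x = real_of_int \<lceil>2^m * h x\<rceil> / 2^m" if "\<bar>h x\<bar> \<le> real m" for m x
  proof -
    have "\<lceil>2^m * h x\<rceil> \<le> int m * 2^m"
      unfolding ceiling_le_iff using that by (simp add: mult.commute mult_left_mono)
    moreover have "-(int m * 2^m) \<le> \<lceil>2^m * h x\<rceil>"
    proof -
      have "- (real m * 2^m) \<le> 2^m * h x" using that
        using mult_left_mono[of "- real m" "h x" "2^m"] by (simp add: mult.commute)
      then show ?thesis unfolding le_ceiling_iff by simp
    qed
    ultimately show ?thesis unfolding hm_def by simp
  qed
  have hm_bounds: "h x \<le> hm m x \<and> hm m x \<le> h x + (1/2)^m" if "\<bar>h x\<bar> \<le> real m" for m x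
  proof -
    have a: "2^m * h x \<le> real_of_int \<lceil>2^m * h x\<rceil>" by (rule le_of_int_ceiling)
    have b: "real_of_int \<lceil>2^m * h x\<rceil> \<le> 2^m * h x + 1" by (rule of_int_ceiling_le_add_one)
    have p: "(0::real) < 2^m" by simp
    have "h x \<le> real_of_int \<lceil>2^m * h x\<rceil> / 2^m" using a p by (simp add: pos_le_divide_eq mult.commute)
    moreover have "real_of_int \<lceil>2^m * h x\<rceil> / 2^m \<le> h x + (1/2)^m"
    proof -
      have "2^m * (h x + 1/2^m) = 2^m * h x + (1::real)" using p by (simp add: distrib_left)
      then show ?thesis using b p by (simp add: pos_divide_le_eq power_divide mult.commute)
    qed
    ultimately show ?thesis unfolding hm_eq[OF that] by simp
  qed
  have ev: "\<forall>\<^sub>F m in sequentially. h x \<le> hm m x \<and> hm m x \<le> h x + (1/2)^m" for x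
  proof -
    obtain N :: nat where "\<bar>h x\<bar> \<le> real N" using real_arch_simple by blast
    then show ?thesis unfolding eventually_sequentially
      by (intro exI[of _ N]) (auto intro!: hm_bounds)
  qed
  have conv: "(\<lambda>m. hm m x) \<longlonglongrightarrow> h x" for x
  proof (rule tendsto_sandwich[of "\<lambda>_. h x" _ _ "\<lambda>m. h x + (1/2)^m"])
    show "\<forall>\<^sub>F m in sequentially. h x \<le> hm m x" using ev[of x] by (auto elim: eventually_mono)
    show "\<forall>\<^sub>F m in sequentially. hm m x \<le> h x + (1/2)^m" using ev[of x] by (auto elim: eventually_mono)
    show "(\<lambda>m. h x + (1/2)^m) \<longlonglongrightarrow> h x"
      using tendsto_add[OF tendsto_const LIMSEQ_realpow_zero[of "1/2::real"]] by simp
  qed simp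
  have Fhm_meas[measurable]: "(\<lambda>x. F x (hm m x)) \<in> borel_measurable SX" for m
    by (rule meas_fin[OF Fm hm_meas hm_fin])
  have Fconv: "(\<lambda>m. F x (hm m x)) \<longlonglongrightarrow> F x (h x)" if "x \<in> space SX" for x
    using Fcont that conv[of x] by (intro isCont_tendsto_compose[where g="F x"]) auto
  have Fh_meas[measurable]: "(\<lambda>x. F x (h x)) \<in> borel_measurable SX"
    by (rule borel_measurable_LIMSEQ_real[OF Fconv Fhm_meas])
  have I1: "(\<lambda>m. \<integral>x. F x (hm m x) \<partial>PX) \<longlonglongrightarrow> (\<integral>x. F x (h x) \<partial>PX)"
  proof (rule integral_dominated_convergence[where w="\<lambda>_. 1"])
    show "AE x in PX. (\<lambda>m. F x (hm m x)) \<longlonglongrightarrow> F x (h x)" using Fconv by auto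
    show "AE x in PX. norm (F x (hm m x)) \<le> 1" for m using Fb by auto
  qed auto
  have I2: "(\<lambda>m. measure M {\<omega>\<in>space M. Y0 \<omega> \<le> hm m (X0 \<omega>)}) \<longlonglongrightarrow> measure M {\<omega>\<in>space M. Y0 \<omega> \<le> h (X0 \<omega>)}"
  proof -
    have "(\<lambda>m. \<integral>\<omega>. indicator {\<omega>\<in>space M. Y0 \<omega> \<le> hm m (X0 \<omega>)} \<omega> \<partial>M) \<longlonglongrightarrow> (\<integral>\<omega>. indicator {\<omega>\<in>space M. Y0 \<omega> \<le> h (X0 \<omega>)} \<omega> \<partial>M :: real)"
    proof (rule integral_dominated_convergence[where w="\<lambda>_. 1"])
      show "AE \<omega> in M. (\<lambda>m. indicator {\<omega>\<in>space M. Y0 \<omega> \<le> hm m (X0 \<omega>)} \<omega>) \<longlonglongrightarrow> (indicator {\<omega>\<in>space M. Y0 \<omega> \<le> h (X0 \<omega>)} \<omega> :: real)"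
      proof (rule AE_I2)
        fix \<omega> assume \<omega>: "\<omega> \<in> space M"
        show "(\<lambda>m. indicator {\<omega>\<in>space M. Y0 \<omega> \<le> hm m (X0 \<omega>)} \<omega>) \<longlonglongrightarrow> (indicator {\<omega>\<in>space M. Y0 \<omega> \<le> h (X0 \<omega>)} \<omega> :: real)"
        proof (cases "Y0 \<omega> \<le> h (X0 \<omega>)")
          case True
          have "\<forall>\<^sub>F m in sequentially. indicator {\<omega>\<in>space M. Y0 \<omega> \<le> hm m (X0 \<omega>)} \<omega> = (1::real)"
            using ev[of "X0 \<omega>"] by eventually_elim (use True \<omega> in auto)
          then show ?thesis using True \<omega> by (simp add: tendsto_eventually)
        next
          case False
          have "\<forall>\<^sub>F m in sequentially. hm m (X0 \<omega>) < Y0 \<omega>"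
            using conv[of "X0 \<omega>"] False by (auto intro: order_tendstoD)
          then have "\<forall>\<^sub>F m in sequentially. indicator {\<omega>\<in>space M. Y0 \<omega> \<le> hm m (X0 \<omega>)} \<omega> = (0::real)"
            by eventually_elim auto
          then show ?thesis using False \<omega> by (simp add: tendsto_eventually)
        qed
      qed
    qed (auto simp: indicator_def)
    then show ?thesis by (simp add: Int_absorb2 Collect_restrict)
  qed
  have eq: "measure M {\<omega>\<in>space M. Y0 \<omega> \<le> hm m (X0 \<omega>)} = (\<integral>x. F x (hm m x) \<partial>PX)" for m
    unfolding PX_def by (rule cond_fin[OF M X0 Y0 Fb Fm Fc hm_meas hm_fin])
  show ?thesis using LIMSEQ_unique[OF I2[unfolded eq] I1] by (simp add: PX_def)
qed




lemma outer_prob_le: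
  assumes "finite_measure M" "B \<in> sets M" "A \<subseteq> B"
  shows "outer_prob M A \<le> measure M B"
  unfolding outer_prob_def
  by (rule cInf_lower) (use assms in \<open>auto intro!: bdd_belowI[of _ 0]\<close>)

lemma outer_prob_nonneg: "A \<subseteq> space M \<Longrightarrow> 0 \<le> outer_prob M A"
  unfolding outer_prob_def by (rule cInf_greatest) auto

lemma outer_prob_eq:
  assumes "finite_measure M" "A \<in> sets M"
  shows "outer_prob M A = measure M A"
proof (rule antisym)
  show "outer_prob M A \<le> measure M A" by (rule outer_prob_le) (use assms in auto)
  show "measure M A \<le> outer_prob M A"
    unfolding outer_prob_def
    by (rule cInf_greatest) (use assms in \<open>auto intro: finite_measure.finite_measure_mono\<close>)
qed

lemma sup_rat_right:
  fixes f :: "real \<Rightarrow> real"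
  assumes rc: "\<And>y. continuous (at_right y) f"
  shows "(SUP y. ennreal (f y)) = (SUP q\<in>\<rat>. ennreal (f q))"
proof (rule antisym)
  show "(SUP q\<in>\<rat>. ennreal (f q)) \<le> (SUP y. ennreal (f y))" by (rule SUP_subset_mono) auto
  show "(SUP y. ennreal (f y)) \<le> (SUP q\<in>\<rat>. ennreal (f q))"
  proof (rule SUP_least)
    fix y
    have "\<forall>k. \<exists>r\<in>\<rat>. y < r \<and> r < y + 1 / (real k + 1)"
      by (intro allI Rats_dense_in_real) (simp add: add_pos_pos)
    then obtain r where r: "\<And>k. r k \<in> \<rat>" "\<And>k. y < r k" "\<And>k. r k < y + 1 / (real k + 1)"
      by metis
    have "r \<longlonglongrightarrow> y"
    proof (rule tendsto_sandwich[of "\<lambda>_. y" _ _ "\<lambda>k. y + 1 / (real k + 1)"])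
      show "\<forall>\<^sub>F k in sequentially. y \<le> r k" by (intro always_eventually allI less_imp_le r(2))
      show "\<forall>\<^sub>F k in sequentially. r k \<le> y + 1 / (real k + 1)" by (intro always_eventually allI less_imp_le r(3))
      show "(\<lambda>k. y + 1 / (real k + 1)) \<longlonglongrightarrow> y"
        using LIMSEQ_inverse_real_of_nat_add[of y] by (simp add: inverse_eq_divide add.commute)
    qed simp
    then have "filterlim r (at_right y) sequentially"
      using r(2) by (auto simp: filterlim_at intro!: always_eventually)
    then have "((\<lambda>k. f (r k)) \<longlongrightarrow> f y) sequentially"
      using rc[of y] by (auto simp: continuous_within intro: filterlim_compose)
    then have lim: "((\<lambda>k. ennreal (f (r k))) \<longlongrightarrow> ennreal (f y)) sequentially"
      by (rule tendsto_ennrealI)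
    show "ennreal (f y) \<le> (SUP q\<in>\<rat>. ennreal (f q))"
    proof (rule LIMSEQ_le_const2[OF lim])
      show "\<exists>N. \<forall>k\<ge>N. ennreal (f (r k)) \<le> (SUP q\<in>\<rat>. ennreal (f q))"
        by (intro exI[of _ 0] allI impI SUP_upper r(1))
    qed
  qed
qed

locale setting =
  fixes M :: "'a measure" and SX :: "'x measure" and Z :: "nat \<Rightarrow> 'a \<Rightarrow> 'x \<times> real"
    and F :: "'x \<Rightarrow> real \<Rightarrow> real" and S :: "nat \<Rightarrow> 's measure" and \<Theta> :: "nat \<Rightarrow> 'a \<Rightarrow> 's"
    and G :: "nat \<Rightarrow> 's \<Rightarrow> 'x \<Rightarrow> real \<Rightarrow> real"
  assumes prob: "prob_space M"
    and iid: "prob_space.indep_vars M (\<lambda>_. SX \<Otimes>\<^sub>M borel) Z UNIV"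
    and ident: "\<forall>i. distr M (SX \<Otimes>\<^sub>M borel) (Z i) = distr M (SX \<Otimes>\<^sub>M borel) (Z 0)"
    and F_cdf: "\<forall>x\<in>space SX. is_cdf (F x)"
    and F_meas: "\<forall>y. (\<lambda>x. F x y) \<in> borel_measurable SX"
    and F_cond: "\<forall>A\<in>sets SX. \<forall>y. measure M {\<omega>\<in>space M. fst (Z 0 \<omega>) \<in> A \<and> snd (Z 0 \<omega>) \<le> y}
                   = (LINT x:A|distr M SX (\<lambda>\<omega>. fst (Z 0 \<omega>)). F x y)"
    and G_meas: "\<forall>n. (\<lambda>(\<theta>, x, y). G n \<theta> x y) \<in> borel_measurable (S n \<Otimes>\<^sub>M (SX \<Otimes>\<^sub>M borel))"
    and G_cdf: "\<forall>n. \<forall>\<theta>\<in>space (S n). \<forall>x\<in>space SX. is_cdf (G n \<theta> x)"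
    and \<Theta>_meas: "\<forall>n. \<Theta> n \<in> measurable M (S n)"
    and indep: "\<forall>n. prob_space.indep_set M (sets (vimage_algebra (space M) (\<Theta> n) (S n)))
                   (sets (vimage_algebra (space M) (\<lambda>\<omega>. \<lambda>i\<in>{..n}. Z i \<omega>)
                      (PiM {..n} (\<lambda>_. SX \<Otimes>\<^sub>M borel))))"
begin

sublocale prob_space M by (rule prob)

definition "X i \<omega> = fst (Z i \<omega>)"
definition "Yv i \<omega> = snd (Z i \<omega>)"
definition "PX = distr M SX (\<lambda>\<omega>. fst (Z 0 \<omega>))"
definition "Dsq n \<theta> x = (SUP y. ennreal ((G n \<theta> x y - F x y)\<^sup>2))"
definition "E\<theta> n \<theta> = (\<integral>\<^sup>+ x. Dsq n \<theta> x \<partial>PX)"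

lemma Z_meas[measurable]: "Z i \<in> measurable M (SX \<Otimes>\<^sub>M borel)"
  using iid unfolding indep_vars_def2 by auto

lemma X_meas[measurable]: "X i \<in> measurable M SX"
  unfolding X_def[abs_def] by measurable

lemma Yv_meas[measurable]: "Yv i \<in> borel_measurable M"
  unfolding Yv_def[abs_def] by measurable

lemma \<Theta>_meas'[measurable]: "\<Theta> n \<in> measurable M (S n)"
  using \<Theta>_meas by blast

lemma PX_prob: "prob_space PX"
  unfolding PX_def by (rule prob_space_distr) simp

lemma space_PX[simp]: "space PX = space SX" and sets_PX[simp, measurable_cong]: "sets PX = sets SX"
  by (simp_all add: PX_def)

lemma distr_X: "distr M SX (X j) = PX"
proof -
  have "distr M SX (X j) = distr (distr M (SX \<Otimes>\<^sub>M borel) (Z j)) SX fst"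
    by (subst distr_distr) (auto simp: X_def[abs_def] comp_def)
  also have "\<dots> = distr (distr M (SX \<Otimes>\<^sub>M borel) (Z 0)) SX fst" using ident[rule_format, of j] by simp
  also have "\<dots> = PX"
    by (subst distr_distr) (auto simp: PX_def comp_def)
  finally show ?thesis .
qed

lemma indep_\<Theta>_X:
  assumes j: "j \<le> n" and A: "A \<in> sets (S n)" and B: "B \<in> sets SX"
  shows "prob ((\<Theta> n -` A \<inter> space M) \<inter> (X j -` B \<inter> space M)) = prob (\<Theta> n -` A \<inter> space M) * prob (X j -` B \<inter> space M)"
proof -
  define Zv where "Zv \<omega> = (\<lambda>i\<in>{..n}. Z i \<omega>)" for \<omega>
  have Zv_meas: "Zv \<in> measurable M (PiM {..n} (\<lambda>_. SX \<Otimes>\<^sub>M borel))"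
    unfolding Zv_def[abs_def] by (rule measurable_restrict) simp
  have iv: "indep_set (sets (vimage_algebra (space M) (\<Theta> n) (S n))) (sets (vimage_algebra (space M) Zv (PiM {..n} (\<lambda>_. SX \<Otimes>\<^sub>M borel))))"
    unfolding Zv_def[abs_def] using indep by blast
  have pm: "(\<lambda>f. fst (f j)) \<in> measurable (PiM {..n} (\<lambda>_. SX \<Otimes>\<^sub>M borel)) SX"
  proof -
    have "j \<in> {..n}" using j by simp
    then show ?thesis by measurable
  qed
  define C :: "(nat \<Rightarrow> 'x \<times> real) set" where "C = (\<lambda>f. fst (f j)) -` B \<inter> space (PiM {..n} (\<lambda>_. SX \<Otimes>\<^sub>M borel))"
  have C: "C \<in> sets (PiM {..n} (\<lambda>_. SX \<Otimes>\<^sub>M borel))" unfolding C_def by (rule measurable_sets[OF pm B])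
  have eqC: "X j -` B \<inter> space M = Zv -` C \<inter> space M"
    using j measurable_space[OF Zv_meas] by (auto simp: C_def Zv_def X_def)
  have a: "\<Theta> n -` A \<inter> space M \<in> sets (vimage_algebra (space M) (\<Theta> n) (S n))"
    using A measurable_space[OF \<Theta>_meas'] by (subst sets_vimage_algebra2) auto
  have b: "X j -` B \<inter> space M \<in> sets (vimage_algebra (space M) Zv (PiM {..n} (\<lambda>_. SX \<Otimes>\<^sub>M borel)))"
    unfolding eqC using C measurable_space[OF Zv_meas] by (subst sets_vimage_algebra2) auto
  show ?thesis using iv a b unfolding indep_sets2_eq by blast
qed

lemma distr_\<Theta>_X:
  assumes j: "j \<le> n"
  shows "distr M (S n) (\<Theta> n) \<Otimes>\<^sub>M PX = distr M (S n \<Otimes>\<^sub>M SX) (\<lambda>\<omega>. (\<Theta> n \<omega>, X j \<omega>))"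
proof (rule pair_measure_eqI)
  show "sigma_finite_measure (distr M (S n) (\<Theta> n))"
    by (rule prob_space_imp_sigma_finite, rule prob_space_distr) simp
  show "sigma_finite_measure PX" by (rule prob_space_imp_sigma_finite, rule PX_prob)
  show "sets (distr M (S n) (\<Theta> n) \<Otimes>\<^sub>M PX) = sets (distr M (S n \<Otimes>\<^sub>M SX) (\<lambda>\<omega>. (\<Theta> n \<omega>, X j \<omega>)))"
    by (simp cong: sets_pair_measure_cong)
  fix A B assume A: "A \<in> sets (distr M (S n) (\<Theta> n))" and B: "B \<in> sets PX"
  then have A': "A \<in> sets (S n)" and B': "B \<in> sets SX" by auto
  have "emeasure (distr M (S n \<Otimes>\<^sub>M SX) (\<lambda>\<omega>. (\<Theta> n \<omega>, X j \<omega>))) (A \<times> B)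
      = emeasure M ((\<Theta> n -` A \<inter> space M) \<inter> (X j -` B \<inter> space M))"
    using A' B' by (subst emeasure_distr) (auto intro!: arg_cong[where f="emeasure M"])
  also have "\<dots> = ennreal (prob (\<Theta> n -` A \<inter> space M) * prob (X j -` B \<inter> space M))"
    by (simp add: emeasure_eq_measure indep_\<Theta>_X[OF j A' B'])
  also have "\<dots> = emeasure (distr M (S n) (\<Theta> n)) A * emeasure PX B"
    using A' B' by (simp add: emeasure_distr emeasure_eq_measure ennreal_mult flip: distr_X[of j])
  finally show "emeasure (distr M (S n) (\<Theta> n)) A * emeasure PX B = emeasure (distr M (S n \<Otimes>\<^sub>M SX) (\<lambda>\<omega>. (\<Theta> n \<omega>, X j \<omega>))) (A \<times> B)" by simp
qed

lemma Dsq_rat: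
  assumes "\<theta> \<in> space (S n)" "x \<in> space SX"
  shows "Dsq n \<theta> x = (SUP q\<in>\<rat>. ennreal ((G n \<theta> x q - F x q)\<^sup>2))"
  unfolding Dsq_def
proof (rule sup_rat_right)
  fix y
  have "continuous (at_right y) (G n \<theta> x)" "continuous (at_right y) (F x)"
    using G_cdf F_cdf assms by (auto simp: is_cdf_def)
  then show "continuous (at_right y) (\<lambda>y. (G n \<theta> x y - F x y)\<^sup>2)"
    by (intro continuous_intros)
qed

lemma Dsq_meas[measurable]: "(\<lambda>p. Dsq n (fst p) (snd p)) \<in> borel_measurable (S n \<Otimes>\<^sub>M SX)"
proof -
  have Gm: "(\<lambda>(\<theta>, x, y). G n \<theta> x y) \<in> borel_measurable (S n \<Otimes>\<^sub>M (SX \<Otimes>\<^sub>M borel))" using G_meas by blast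
  have Fm[measurable]: "(\<lambda>x. F x y) \<in> borel_measurable SX" for y using F_meas by blast
  have g[measurable]: "(\<lambda>p. G n (fst p) (snd p) q) \<in> borel_measurable (S n \<Otimes>\<^sub>M SX)" for q
  proof -
    have "(\<lambda>p. (fst p, snd p, q)) \<in> measurable (S n \<Otimes>\<^sub>M SX) (S n \<Otimes>\<^sub>M (SX \<Otimes>\<^sub>M borel))" by measurable
    from measurable_compose[OF this Gm] show ?thesis by simp
  qed
  have g'[measurable]: "(\<lambda>p. ennreal ((G n (fst p) (snd p) q - F (snd p) q)\<^sup>2)) \<in> borel_measurable (S n \<Otimes>\<^sub>M SX)" for q
    by measurable
  have "(\<lambda>p. SUP q\<in>\<rat>. ennreal ((G n (fst p) (snd p) q - F (snd p) q)\<^sup>2)) \<in> borel_measurable (S n \<Otimes>\<^sub>M SX)"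
    by (rule borel_measurable_SUP) (auto simp: countable_rat)
  then show ?thesis
    by (rule measurable_cong[THEN iffD1, rotated]) (auto simp: space_pair_measure Dsq_rat)
qed

lemma E\<theta>_meas[measurable]: "E\<theta> n \<in> borel_measurable (S n)"
proof -
  interpret PXs: sigma_finite_measure PX by (rule prob_space_imp_sigma_finite, rule PX_prob)
  have "(\<lambda>p. Dsq n (fst p) (snd p)) \<in> borel_measurable (S n \<Otimes>\<^sub>M PX)"
    using Dsq_meas by (simp cong: measurable_cong_sets sets_pair_measure_cong)
  from PXs.borel_measurable_nn_integral_fst[OF this] show ?thesis
    by (simp add: E\<theta>_def[abs_def])
qed

lemma markov_X:
  assumes j: "j \<le> n" and c: "c > 0" and \<eta>: "\<eta> \<ge> 0"
  shows "measure M {\<omega>\<in>space M. ennreal c \<le> Dsq n (\<Theta> n \<omega>) (X j \<omega>)}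
     \<le> measure M {\<omega>\<in>space M. ennreal \<eta> \<le> E\<theta> n (\<Theta> n \<omega>)} + \<eta> / c"
proof -
  interpret PXp: prob_space PX by (rule PX_prob)
  define P\<Theta> where "P\<Theta> = distr M (S n) (\<Theta> n)"
  interpret PT: prob_space P\<Theta> unfolding P\<Theta>_def by (rule prob_space_distr) simp
  have [simp]: "space P\<Theta> = space (S n)" and [measurable_cong, simp]: "sets P\<Theta> = sets (S n)" by (simp_all add: P\<Theta>_def)
  define B where "B = {p \<in> space (S n \<Otimes>\<^sub>M SX). ennreal c \<le> Dsq n (fst p) (snd p) \<and> E\<theta> n (fst p) < ennreal \<eta>}"
  have Bm: "B \<in> sets (S n \<Otimes>\<^sub>M SX)" unfolding B_def by measurable
  have Bm': "B \<in> sets (P\<Theta> \<Otimes>\<^sub>M PX)" using Bm by (simp cong: sets_pair_measure_cong)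
  have sub: "{\<omega>\<in>space M. ennreal c \<le> Dsq n (\<Theta> n \<omega>) (X j \<omega>)} \<subseteq>
      {\<omega>\<in>space M. ennreal \<eta> \<le> E\<theta> n (\<Theta> n \<omega>)} \<union> ((\<lambda>\<omega>. (\<Theta> n \<omega>, X j \<omega>)) -` B \<inter> space M)"
    using measurable_space[OF \<Theta>_meas'] measurable_space[OF X_meas]
    by (auto simp: B_def space_pair_measure not_le)
  have inner: "emeasure PX (Pair \<theta> -` B) \<le> ennreal (\<eta> / c)" if \<theta>: "\<theta> \<in> space (S n)" for \<theta>
  proof (cases "E\<theta> n \<theta> < ennreal \<eta>")
    case True
    have PB: "Pair \<theta> -` B = {x\<in>space SX. ennreal c \<le> Dsq n \<theta> x}"
      using True \<theta> by (auto simp: B_def space_pair_measure)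
    have PBm: "Pair \<theta> -` B \<in> sets SX" using sets_Pair1[OF Bm] .
    have "ennreal c * emeasure PX (Pair \<theta> -` B) = (\<integral>\<^sup>+ x. ennreal c * indicator (Pair \<theta> -` B) x \<partial>PX)"
      using PBm by (simp add: nn_integral_cmult_indicator)
    also have "\<dots> \<le> (\<integral>\<^sup>+ x. Dsq n \<theta> x \<partial>PX)"
      by (rule nn_integral_mono) (auto simp: PB indicator_def)
    also have "\<dots> < ennreal \<eta>" using True by (simp add: E\<theta>_def)
    finally have lt: "ennreal (c * measure PX (Pair \<theta> -` B)) < ennreal \<eta>"
      by (simp add: PXp.emeasure_eq_measure ennreal_mult c less_imp_le)
    then have "c * measure PX (Pair \<theta> -` B) < \<eta>" by (metis ennreal_leI not_le)
    then have "measure PX (Pair \<theta> -` B) \<le> \<eta> / c" using c by (simp add: pos_le_divide_eq mult.commute)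
    then show ?thesis by (simp add: PXp.emeasure_eq_measure ennreal_leI)
  next
    case False
    then have "Pair \<theta> -` B = {}" by (auto simp: B_def)
    then show ?thesis by simp
  qed
  have "emeasure M ((\<lambda>\<omega>. (\<Theta> n \<omega>, X j \<omega>)) -` B \<inter> space M) = emeasure (distr M (S n \<Otimes>\<^sub>M SX) (\<lambda>\<omega>. (\<Theta> n \<omega>, X j \<omega>))) B"
    using Bm by (subst emeasure_distr) auto
  also have "\<dots> = emeasure (P\<Theta> \<Otimes>\<^sub>M PX) B" using distr_\<Theta>_X[OF j] by (simp add: P\<Theta>_def)
  also have "\<dots> = (\<integral>\<^sup>+\<theta>. emeasure PX (Pair \<theta> -` B) \<partial>P\<Theta>)"
    by (rule PXp.emeasure_pair_measure_alt[OF Bm'])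
  also have "\<dots> \<le> (\<integral>\<^sup>+\<theta>. ennreal (\<eta> / c) \<partial>P\<Theta>)"
    by (rule nn_integral_mono) (auto intro: inner)
  also have "\<dots> = ennreal (\<eta> / c)" using PT.emeasure_space_1 by simp
  finally have e2: "measure M ((\<lambda>\<omega>. (\<Theta> n \<omega>, X j \<omega>)) -` B \<inter> space M) \<le> \<eta> / c"
    using c \<eta> by (simp add: emeasure_eq_measure ennreal_le_iff)
  have "measure M {\<omega>\<in>space M. ennreal c \<le> Dsq n (\<Theta> n \<omega>) (X j \<omega>)} \<le>
      measure M ({\<omega>\<in>space M. ennreal \<eta> \<le> E\<theta> n (\<Theta> n \<omega>)} \<union> ((\<lambda>\<omega>. (\<Theta> n \<omega>, X j \<omega>)) -` B \<inter> space M))"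
    by (rule finite_measure_mono[OF sub]) (use Bm in measurable)
  also have "\<dots> \<le> measure M {\<omega>\<in>space M. ennreal \<eta> \<le> E\<theta> n (\<Theta> n \<omega>)} + measure M ((\<lambda>\<omega>. (\<Theta> n \<omega>, X j \<omega>)) -` B \<inter> space M)"
    by (rule measure_Un_le) (use Bm in measurable)
  finally show ?thesis using e2 by simp
qed

end




context setting
begin

lemma q_meas[measurable]:
  assumes a: "0 < a" "a < 1"
  shows "(\<lambda>x. geninv (F x) a) \<in> borel_measurable SX"
proof (rule borel_measurable_iff_le[THEN iffD2], intro allI)
  fix y
  have "{x \<in> space SX. geninv (F x) a \<le> y} = {x \<in> space SX. a \<le> F x y}"
    using geninv_le_iff[OF _ a] F_cdf by auto
  moreover have "{x \<in> space SX. a \<le> F x y} \<in> sets SX"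
  proof -
    have [measurable]: "(\<lambda>x. F x y) \<in> borel_measurable SX" using F_meas by blast
    show ?thesis by measurable
  qed
  ultimately show "{x \<in> space SX. geninv (F x) a \<le> y} \<in> sets SX" by simp
qed

lemma probA:
  assumes Fc: "\<forall>x\<in>space SX. \<forall>y. isCont (F x) y" and a: "0 < a" "a < 1"
  shows "measure M {\<omega>\<in>space M. Yv j \<omega> \<le> geninv (F (X j \<omega>)) a} = a"
proof -
  interpret PXp: prob_space PX by (rule PX_prob)
  define C where "C = {z \<in> space (SX \<Otimes>\<^sub>M borel). snd z \<le> geninv (F (fst z)) a}"
  have Cm: "C \<in> sets (SX \<Otimes>\<^sub>M borel)" unfolding C_def using a by measurable
  have eqj: "{\<omega>\<in>space M. Yv i \<omega> \<le> geninv (F (X i \<omega>)) a} = Z i -` C \<inter> space M" for i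
    using measurable_space[OF Z_meas[of i]] by (auto simp: C_def X_def Yv_def)
  have "measure M {\<omega>\<in>space M. Yv j \<omega> \<le> geninv (F (X j \<omega>)) a} = measure (distr M (SX \<Otimes>\<^sub>M borel) (Z j)) C"
    unfolding eqj using Cm by (subst measure_distr) auto
  also have "\<dots> = measure (distr M (SX \<Otimes>\<^sub>M borel) (Z 0)) C" using ident[rule_format, of j] by simp
  also have "\<dots> = measure M {\<omega>\<in>space M. Yv 0 \<omega> \<le> geninv (F (X 0 \<omega>)) a}"
    unfolding eqj using Cm by (subst measure_distr) auto
  also have "\<dots> = (\<integral>x. F x (geninv (F x) a) \<partial>distr M SX (X 0))"
  proof (rule cond_gen[OF prob X_meas Yv_meas _ F_meas _ Fc q_meas[OF a]])
    show "\<forall>x\<in>space SX. \<forall>y. 0 \<le> F x y \<and> F x y \<le> 1" using F_cdf cdf_ge0 cdf_le1 by blast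
    show "\<forall>A\<in>sets SX. \<forall>y. measure M {\<omega> \<in> space M. X 0 \<omega> \<in> A \<and> Yv 0 \<omega> \<le> y} = (LINT x:A|distr M SX (X 0). F x y)"
      using F_cond by (simp add: X_def[abs_def] Yv_def[abs_def])
  qed
  also have "\<dots> = (\<integral>x. a \<partial>PX)"
    using geninv_cont[OF _ a] F_cdf Fc
    by (intro Bochner_Integration.integral_cong) (auto simp: PX_def X_def[abs_def])
  also have "\<dots> = a" using PXp.prob_space by simp
  finally show ?thesis .
qed

definition "Ind a i \<omega> = (if Yv i \<omega> \<le> geninv (F (X i \<omega>)) a then 1 else (0::real))"

lemma hoeff:
  assumes Fc: "\<forall>x\<in>space SX. \<forall>y. isCont (F x) y" and a: "0 < a" "a < 1" and n: "n > 0" and e: "\<epsilon> \<ge> 0"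
  shows "prob {\<omega>\<in>space M. (\<Sum>i\<in>{..<n}. Ind a i \<omega>) / real n \<le> a - \<epsilon>} \<le> exp (-2 * real n * \<epsilon>\<^sup>2)"
    and "prob {\<omega>\<in>space M. (\<Sum>i\<in>{..<n}. Ind a i \<omega>) / real n \<ge> a + \<epsilon>} \<le> exp (-2 * real n * \<epsilon>\<^sup>2)"
proof -
  define g where "g z = (if snd z \<le> geninv (F (fst z)) a then 1 else (0::real))" for z
  have gm: "g \<in> borel_measurable (SX \<Otimes>\<^sub>M borel)" unfolding g_def using a by measurable
  have Ind_eq: "Ind a i = (\<lambda>\<omega>. g (Z i \<omega>))" for i by (auto simp: Ind_def g_def X_def Yv_def fun_eq_iff)
  have iv: "indep_vars (\<lambda>_. borel) (Ind a) UNIV"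
    unfolding Ind_eq by (rule indep_vars_compose2[OF iid gm])
  have dI: "distr M borel (Ind a i) = distr M borel (Ind a 0)" for i
  proof -
    have "distr M borel (Ind a i) = distr (distr M (SX \<Otimes>\<^sub>M borel) (Z i)) borel g"
      unfolding Ind_eq using gm by (subst distr_distr) (auto simp: comp_def)
    also have "\<dots> = distr (distr M (SX \<Otimes>\<^sub>M borel) (Z 0)) borel g" using ident[rule_format, of i] by simp
    also have "\<dots> = distr M borel (Ind a 0)"
      unfolding Ind_eq using gm by (subst distr_distr) (auto simp: comp_def)
    finally show ?thesis .
  qed
  have Im[measurable]: "Ind a i \<in> borel_measurable M" for i unfolding Ind_eq using gm by measurable
  interpret H: Hoeffding_ineq_iid M "{..<n}" "Ind a" "Ind a 0" 0 1 "expectation (Ind a 0)"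
  proof unfold_locales
    show "indep_vars (\<lambda>_. borel) (Ind a) {..<n}" using iv by (rule indep_vars_subset) auto
    show "AE x in M. Ind a 0 x \<in> {0..1}" by (auto simp: Ind_def)
    show "finite {..<n}" by simp
    show "\<And>i. i \<in> {..<n} \<Longrightarrow> distr M borel (Ind a i) = distr M borel (Ind a 0)" using dI by blast
    show "random_variable borel (Ind a 0)" by (rule Im)
  qed
  have "expectation (Ind a 0) = prob {\<omega>\<in>space M. Yv 0 \<omega> \<le> geninv (F (X 0 \<omega>)) a}"
  proof -
    have "expectation (Ind a 0) = expectation (indicator {\<omega>\<in>space M. Yv 0 \<omega> \<le> geninv (F (X 0 \<omega>)) a})"
      by (intro Bochner_Integration.integral_cong) (auto simp: Ind_def indicator_def)
    then show ?thesis by (simp add: Int_absorb2 Collect_restrict)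
  qed
  also have "\<dots> = a" by (rule probA[OF Fc a])
  finally have mu: "expectation (Ind a 0) = a" .
  show "prob {\<omega>\<in>space M. (\<Sum>i\<in>{..<n}. Ind a i \<omega>) / real n \<le> a - \<epsilon>} \<le> exp (-2 * real n * \<epsilon>\<^sup>2)"
  proof -
    have ne: "{..<n} \<noteq> {}" using n by auto
    show ?thesis using H.Hoeffding_ineq_le'[OF e zero_less_one ne] by (simp add: mu)
  qed
  show "prob {\<omega>\<in>space M. (\<Sum>i\<in>{..<n}. Ind a i \<omega>) / real n \<ge> a + \<epsilon>} \<le> exp (-2 * real n * \<epsilon>\<^sup>2)"
  proof -
    have ne: "{..<n} \<noteq> {}" using n by auto
    show ?thesis using H.Hoeffding_ineq_ge'[OF e zero_less_one ne] by (simp add: mu)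
  qed
qed

lemma card_sum_if: fixes n :: nat shows "real (card {i. i < n \<and> P i}) = (\<Sum>i<n. if P i then 1 else 0)"
proof -
  have "(\<Sum>i<n. if P i then 1 else (0::real)) = (\<Sum>i\<in>{i\<in>{..<n}. P i}. 1)"
    by (rule sum.inter_filter[symmetric]) simp
  also have "{i\<in>{..<n}. P i} = {i. i < n \<and> P i}" by auto
  finally show ?thesis by simp
qed

lemma count_markov:
  assumes n: "n > 0" and c: "c > 0" and \<eta>: "\<eta> \<ge> 0" and t: "t > 0"
  shows "measure M {\<omega>\<in>space M. real n * t \<le> real (card {i. i < n \<and> ennreal c \<le> Dsq n (\<Theta> n \<omega>) (X i \<omega>)})}
    \<le> (measure M {\<omega>\<in>space M. ennreal \<eta> \<le> E\<theta> n (\<Theta> n \<omega>)} + \<eta> / c) / t"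
proof -
  define r where "r = measure M {\<omega>\<in>space M. ennreal \<eta> \<le> E\<theta> n (\<Theta> n \<omega>)} + \<eta> / c"
  define Bad where "Bad i = {\<omega>\<in>space M. ennreal c \<le> Dsq n (\<Theta> n \<omega>) (X i \<omega>)}" for i
  have Badm[measurable]: "Bad i \<in> sets M" for i
  proof -
    have "(\<lambda>\<omega>. Dsq n (\<Theta> n \<omega>) (X i \<omega>)) \<in> borel_measurable M"
      using measurable_compose[OF _ Dsq_meas, of "\<lambda>\<omega>. (\<Theta> n \<omega>, X i \<omega>)" M n] by simp
    then show ?thesis unfolding Bad_def by measurable
  qed
  define u where "u \<omega> = (\<Sum>i<n. indicator (Bad i) \<omega> :: real)" for \<omega>
  have um[measurable]: "u \<in> borel_measurable M" unfolding u_def[abs_def] by measurable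
  have ui: "integrable M u" unfolding u_def[abs_def]
    by (rule Bochner_Integration.integrable_sum) (auto intro!: integrable_real_indicator simp: less_top[symmetric])
  have eqset: "{\<omega>\<in>space M. real n * t \<le> real (card {i. i < n \<and> ennreal c \<le> Dsq n (\<Theta> n \<omega>) (X i \<omega>)})}
      = {\<omega>\<in>space M. u \<omega> \<ge> real n * t}"
  proof -
    have "real (card {i. i < n \<and> ennreal c \<le> Dsq n (\<Theta> n \<omega>) (X i \<omega>)}) = u \<omega>" if "\<omega> \<in> space M" for \<omega>
      unfolding card_sum_if u_def by (rule sum.cong) (use that in \<open>auto simp: Bad_def indicator_def\<close>)
    then show ?thesis by auto
  qed
  have "measure M {\<omega>\<in>space M. u \<omega> \<ge> real n * t} \<le> (\<integral>\<omega>. u \<omega> \<partial>M) / (real n * t)"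
    by (rule integral_Markov_inequality_measure[OF ui sets.top]) (use n t in \<open>auto simp: u_def intro!: sum_nonneg\<close>)
  also have "(\<integral>\<omega>. u \<omega> \<partial>M) = (\<Sum>i<n. measure M (Bad i))"
  proof -
    have "(\<integral>\<omega>. u \<omega> \<partial>M) = (\<Sum>i<n. (\<integral>\<omega>. indicator (Bad i) \<omega> \<partial>M))"
      unfolding u_def by (rule Bochner_Integration.integral_sum) (auto intro!: integrable_real_indicator simp: less_top[symmetric])
    also have "\<dots> = (\<Sum>i<n. measure M (Bad i))"
      by (rule sum.cong[OF refl]) (simp add: Bad_def Int_absorb2 Collect_restrict)
    finally show ?thesis .
  qed
  also have "\<dots> \<le> (\<Sum>i<n. r)"
    by (rule sum_mono) (use markov_X[OF _ c \<eta>] in \<open>auto simp: Bad_def r_def\<close>)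
  also have "\<dots> = real n * r" by simp
  finally have "measure M {\<omega>\<in>space M. u \<omega> \<ge> real n * t} \<le> real n * r / (real n * t)"
    using n t by (simp add: divide_right_mono)
  also have "\<dots> = r / t" using n by simp
  finally show ?thesis unfolding eqset r_def .
qed

end




lemma exp_lim: "c > 0 \<Longrightarrow> (\<lambda>n. exp (-2 * real n * c)) \<longlonglongrightarrow> 0"
proof -
  assume c: "c > 0"
  have "(\<lambda>n. exp (-2 * c) ^ n) \<longlonglongrightarrow> 0" by (rule LIMSEQ_power_zero) (use c in simp)
  moreover have "exp (-2 * real n * c) = exp (-2 * c) ^ n" for n
    using exp_of_nat_mult[of n "-2 * c"] by (simp add: mult_ac)
  ultimately show ?thesis by simp
qed

context setting
begin

lemma Dsq_comp_meas[measurable]: "(\<lambda>\<omega>. Dsq n (\<Theta> n \<omega>) (X j \<omega>)) \<in> borel_measurable M"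
  using measurable_compose[OF _ Dsq_meas, of "\<lambda>\<omega>. (\<Theta> n \<omega>, X j \<omega>)" M n] by simp

lemma Ind_meas[measurable]: "0 < a \<Longrightarrow> a < 1 \<Longrightarrow> Ind a i \<in> borel_measurable M"
  unfolding Ind_def[abs_def] by measurable

lemma card_meas:
  fixes n :: nat
  assumes "\<And>i. {\<omega>\<in>space M. P i \<omega>} \<in> sets M"
  shows "(\<lambda>\<omega>. real (card {i. i < n \<and> P i \<omega>})) \<in> borel_measurable M"
proof -
  have meas: "(\<lambda>\<omega>. (\<Sum>i<n. indicator {\<omega>\<in>space M. P i \<omega>} \<omega> :: real)) \<in> borel_measurable M"
    by (rule borel_measurable_sum, rule borel_measurable_indicator, rule assms)
  have eq: "(\<Sum>i<n. indicator {\<omega>\<in>space M. P i \<omega>} \<omega> :: real) = real (card {i. i < n \<and> P i \<omega>})"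
    if "\<omega> \<in> space M" for \<omega>
    unfolding card_sum_if by (rule sum.cong) (use that in \<open>auto simp: indicator_def\<close>)
  show ?thesis by (rule measurable_cong[THEN iffD1, OF _ meas]) (use eq in auto)
qed

lemma Dsq_small:
  assumes "Dsq n \<theta> x < ennreal (r\<^sup>2)" "r \<ge> 0"
  shows "\<bar>G n \<theta> x y - F x y\<bar> < r"
proof -
  have "ennreal ((G n \<theta> x y - F x y)\<^sup>2) \<le> Dsq n \<theta> x" unfolding Dsq_def by (rule SUP_upper) simp
  then have "ennreal ((G n \<theta> x y - F x y)\<^sup>2) < ennreal (r\<^sup>2)" using assms(1) by (rule order.strict_trans1)
  then have "(G n \<theta> x y - F x y)\<^sup>2 < r\<^sup>2" by (simp add: ennreal_less_iff)
  then have "\<bar>G n \<theta> x y - F x y\<bar>\<^sup>2 < r\<^sup>2" by (simp only: power2_abs)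
  then show ?thesis using assms(2) by (rule power_less_imp_less_base)
qed

lemma main_level:
  assumes Fdiff: "\<forall>x\<in>space SX. \<forall>y. F x differentiable (at y)"
    and K: "K > 0" and \<delta>: "\<delta> > 0"
    and sl: "\<forall>x\<in>space SX. \<forall>y. \<bar>y - geninv (F x) \<beta>\<bar> < \<delta> \<longrightarrow> deriv (F x) y \<ge> 1/K"
    and \<beta>: "0 < \<beta>" "\<beta> < 1"
    and \<eta>: "\<eta> \<longlonglongrightarrow> 0" and \<rho>: "\<rho> \<longlonglongrightarrow> 0"
    and A1: "\<forall>n. outer_prob M {\<omega>\<in>space M. ennreal (\<eta> n) \<le> E\<theta> n (\<Theta> n \<omega>)} \<le> \<rho> n"
    and \<epsilon>: "\<epsilon> > 0"
  shows "(\<lambda>n. outer_prob M {\<omega>\<in>space M. \<bar>geninv (G n (\<Theta> n \<omega>) (X n \<omega>))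
            (emp_quantile (\<lambda>i. G n (\<Theta> n \<omega>) (X i \<omega>) (Yv i \<omega>)) n \<beta>) - geninv (F (X n \<omega>)) \<beta>\<bar> > \<epsilon>}) \<longlonglongrightarrow> 0"
proof -
  have Fc: "\<forall>x\<in>space SX. \<forall>y. isCont (F x) y"
    using Fdiff differentiable_imp_continuous_within by blast
  define e where "e = min \<epsilon> \<delta> / 2"
  have e: "0 < e" "e < \<delta>" "e < \<epsilon>" using \<epsilon> \<delta> by (auto simp: e_def)
  define s where "s = min (e/K) (min \<beta> (1 - \<beta>)) / 4"
  have eK: "e/K > 0" using e K by simp
  have mle: "min (e/K) (min \<beta> (1 - \<beta>)) \<le> e/K" "min (e/K) (min \<beta> (1 - \<beta>)) \<le> \<beta>"
    "min (e/K) (min \<beta> (1 - \<beta>)) \<le> 1 - \<beta>" "min (e/K) (min \<beta> (1 - \<beta>)) > 0" using eK \<beta> by auto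
  have s: "0 < s" "s + s < e/K" "s < \<beta>" "s < 1 - \<beta>" using mle eK unfolding s_def by linarith+
  define d where "d = s"
  define c0 where "c0 = d\<^sup>2"
  define c1 where "c1 = (s/2)\<^sup>2"
  have c0: "c0 > 0" and c1: "c1 > 0" using s by (auto simp: c0_def c1_def d_def)
  define a1 where "a1 = \<beta> + s/2"
  define a2 where "a2 = \<beta> - s/4"
  have a1: "0 < a1" "a1 < 1" and a2: "0 < a2" "a2 < 1" using s \<beta> by (auto simp: a1_def a2_def)
  define \<eta>' where "\<eta>' n = max 0 (\<eta> n)" for n
  have \<eta>'0: "\<eta>' n \<ge> 0" for n by (simp add: \<eta>'_def)
  have \<eta>'e: "ennreal (\<eta> n) = ennreal (\<eta>' n)" for n
    by (cases "\<eta> n \<le> 0") (auto simp: \<eta>'_def ennreal_neg max_def)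
  have \<eta>'lim: "\<eta>' \<longlonglongrightarrow> 0"
    using tendsto_max[OF tendsto_const \<eta>, of 0] by (simp add: \<eta>'_def[abs_def])
  define \<rho>' where "\<rho>' n = measure M {\<omega>\<in>space M. ennreal (\<eta>' n) \<le> E\<theta> n (\<Theta> n \<omega>)}" for n
  have \<rho>'le: "\<rho>' n \<le> \<rho> n" for n
  proof -
    have "(\<lambda>\<omega>. E\<theta> n (\<Theta> n \<omega>)) \<in> borel_measurable M" by measurable
    then have "{\<omega>\<in>space M. ennreal (\<eta>' n) \<le> E\<theta> n (\<Theta> n \<omega>)} \<in> sets M" by measurable
    then have "outer_prob M {\<omega>\<in>space M. ennreal (\<eta>' n) \<le> E\<theta> n (\<Theta> n \<omega>)} = \<rho>' n"
      unfolding \<rho>'_def by (intro outer_prob_eq) (auto intro: finite_measure_axioms)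
    then show ?thesis using A1 \<eta>'e by metis
  qed
  define Bad where "Bad n = {\<omega>\<in>space M. \<bar>geninv (G n (\<Theta> n \<omega>) (X n \<omega>))
            (emp_quantile (\<lambda>i. G n (\<Theta> n \<omega>) (X i \<omega>) (Yv i \<omega>)) n \<beta>) - geninv (F (X n \<omega>)) \<beta>\<bar> > \<epsilon>}" for n
  define B1 where "B1 n = {\<omega>\<in>space M. ennreal c0 \<le> Dsq n (\<Theta> n \<omega>) (X n \<omega>)}" for n
  define B2 where "B2 n = {\<omega>\<in>space M. real n * (s/8) \<le> real (card {i. i < n \<and> ennreal c1 \<le> Dsq n (\<Theta> n \<omega>) (X i \<omega>)})}" for n
  define B3 where "B3 n = {\<omega>\<in>space M. (\<Sum>i\<in>{..<n}. Ind a1 i \<omega>) / real n \<le> a1 - s/4}" for n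
  define B4 where "B4 n = {\<omega>\<in>space M. (\<Sum>i\<in>{..<n}. Ind a2 i \<omega>) / real n \<ge> a2 + s/8}" for n
  have B1m: "B1 n \<in> sets M" for n unfolding B1_def by measurable
  have B2m: "B2 n \<in> sets M" for n
  proof -
    have "(\<lambda>\<omega>. real (card {i. i < n \<and> ennreal c1 \<le> Dsq n (\<Theta> n \<omega>) (X i \<omega>)})) \<in> borel_measurable M"
      by (rule card_meas) measurable
    then show ?thesis unfolding B2_def by measurable
  qed
  have B3m: "B3 n \<in> sets M" for n unfolding B3_def using a1 by measurable
  have B4m: "B4 n \<in> sets M" for n unfolding B4_def using a2 by measurable
  have key: "Bad n \<subseteq> B1 n \<union> B2 n \<union> B3 n \<union> B4 n" if n: "n > 0" for n
  proof
    fix \<omega> assume "\<omega> \<in> Bad n"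
    then have \<omega>: "\<omega> \<in> space M" and gt: "\<bar>geninv (G n (\<Theta> n \<omega>) (X n \<omega>))
            (emp_quantile (\<lambda>i. G n (\<Theta> n \<omega>) (X i \<omega>) (Yv i \<omega>)) n \<beta>) - geninv (F (X n \<omega>)) \<beta>\<bar> > \<epsilon>"
      by (auto simp: Bad_def)
    show "\<omega> \<in> B1 n \<union> B2 n \<union> B3 n \<union> B4 n"
    proof (rule ccontr)
      assume "\<omega> \<notin> B1 n \<union> B2 n \<union> B3 n \<union> B4 n"
      then have nB1: "\<not> ennreal c0 \<le> Dsq n (\<Theta> n \<omega>) (X n \<omega>)"
        and nB2: "\<not> real n * (s/8) \<le> real (card {i. i < n \<and> ennreal c1 \<le> Dsq n (\<Theta> n \<omega>) (X i \<omega>)})"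
        and nB3: "\<not> (\<Sum>i\<in>{..<n}. Ind a1 i \<omega>) / real n \<le> a1 - s/4"
        and nB4: "\<not> (\<Sum>i\<in>{..<n}. Ind a2 i \<omega>) / real n \<ge> a2 + s/8"
        using \<omega> by (auto simp: B1_def B2_def B3_def B4_def)
      define \<theta> where "\<theta> = \<Theta> n \<omega>"
      have \<theta>: "\<theta> \<in> space (S n)" using measurable_space[OF \<Theta>_meas' \<omega>] by (simp add: \<theta>_def)
      have xs: "X i \<omega> \<in> space SX" for i using measurable_space[OF X_meas \<omega>] .
      have Gc: "is_cdf (G n \<theta> (X i \<omega>))" for i using G_cdf \<theta> xs by blast
      have Fcd: "is_cdf (F (X i \<omega>))" for i using F_cdf xs by blast
      have Fq: "F (X i \<omega>) (geninv (F (X i \<omega>)) a) = a" if "0 < a" "a < 1" for i a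
        using geninv_cont[OF Fcd that] Fc xs by blast
      have Fmono: "mono (F (X i \<omega>))" for i using Fcd by (simp add: is_cdf_def)
      have dG: "\<forall>y. \<bar>G n \<theta> (X n \<omega>) y - F (X n \<omega>) y\<bar> \<le> d"
      proof
        fix y
        have "Dsq n \<theta> (X n \<omega>) < ennreal (d\<^sup>2)" using nB1 by (simp add: c0_def \<theta>_def not_le)
        from Dsq_small[OF this, of y] show "\<bar>G n \<theta> (X n \<omega>) y - F (X n \<omega>) y\<bar> \<le> d" using s by (simp add: d_def)
      qed
      have sumc: "(\<Sum>i\<in>{..<n}. Ind a i \<omega>) = real (card {i. i < n \<and> Yv i \<omega> \<le> geninv (F (X i \<omega>)) a})" for a
        by (simp add: card_sum_if Ind_def)
      have npos: "real n > 0" using n by simp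
      have quant: "\<bar>emp_quantile (\<lambda>i. G n \<theta> (X i \<omega>) (Yv i \<omega>)) n \<beta> - \<beta>\<bar> \<le> s"
      proof (rule quantile_bound[where V="\<lambda>i. F (X i \<omega>) (Yv i \<omega>)"
            and bad="\<lambda>i. ennreal c1 \<le> Dsq n \<theta> (X i \<omega>)"
            and Qa="\<lambda>i. Yv i \<omega> \<le> geninv (F (X i \<omega>)) a1"
            and Qb="\<lambda>i. Yv i \<omega> \<le> geninv (F (X i \<omega>)) a2", OF n s(1) _ \<beta>(1)])
        show "\<forall>i<n. 0 \<le> G n \<theta> (X i \<omega>) (Yv i \<omega>)" using cdf_ge0[OF Gc] by blast
        show "\<forall>i<n. \<not> ennreal c1 \<le> Dsq n \<theta> (X i \<omega>) \<longrightarrow> \<bar>G n \<theta> (X i \<omega>) (Yv i \<omega>) - F (X i \<omega>) (Yv i \<omega>)\<bar> < s/2"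
        proof (intro allI impI)
          fix i assume "\<not> ennreal c1 \<le> Dsq n \<theta> (X i \<omega>)"
          then have "Dsq n \<theta> (X i \<omega>) < ennreal ((s/2)\<^sup>2)" by (simp add: c1_def not_le)
          from Dsq_small[OF this] show "\<bar>G n \<theta> (X i \<omega>) (Yv i \<omega>) - F (X i \<omega>) (Yv i \<omega>)\<bar> < s/2" using s by simp
        qed
        show "\<forall>i<n. Yv i \<omega> \<le> geninv (F (X i \<omega>)) a1 \<longrightarrow> F (X i \<omega>) (Yv i \<omega>) \<le> \<beta> + s/2"
        proof (intro allI impI)
          fix i assume "Yv i \<omega> \<le> geninv (F (X i \<omega>)) a1"
          then have "F (X i \<omega>) (Yv i \<omega>) \<le> F (X i \<omega>) (geninv (F (X i \<omega>)) a1)" using Fmono[of i] by (simp add: mono_def)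
          then show "F (X i \<omega>) (Yv i \<omega>) \<le> \<beta> + s/2" using Fq[OF a1, of i] by (simp add: a1_def)
        qed
        show "\<forall>i<n. F (X i \<omega>) (Yv i \<omega>) < \<beta> - s/4 \<longrightarrow> Yv i \<omega> \<le> geninv (F (X i \<omega>)) a2"
        proof (intro allI impI)
          fix i assume "F (X i \<omega>) (Yv i \<omega>) < \<beta> - s/4"
          then have "\<not> geninv (F (X i \<omega>)) a2 \<le> Yv i \<omega>" using geninv_le_iff[OF Fcd a2, of i "Yv i \<omega>"] by (simp add: a2_def)
          then show "Yv i \<omega> \<le> geninv (F (X i \<omega>)) a2" by simp
        qed
        show "real (card {i. i < n \<and> ennreal c1 \<le> Dsq n \<theta> (X i \<omega>)}) < real n * s / 8"
          using nB2 by (simp add: \<theta>_def)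
        show "real (card {i. i < n \<and> Yv i \<omega> \<le> geninv (F (X i \<omega>)) a1}) > real n * (\<beta> + s/4)"
        proof -
          have "a1 - s/4 < (\<Sum>i\<in>{..<n}. Ind a1 i \<omega>) / real n" using nB3 by simp
          then have "(a1 - s/4) * real n < (\<Sum>i\<in>{..<n}. Ind a1 i \<omega>)" using npos by (simp add: pos_less_divide_eq)
          then show ?thesis unfolding sumc by (simp add: a1_def algebra_simps)
        qed
        show "real (card {i. i < n \<and> Yv i \<omega> \<le> geninv (F (X i \<omega>)) a2}) < real n * (\<beta> - s/8)"
        proof -
          have "(\<Sum>i\<in>{..<n}. Ind a2 i \<omega>) / real n < a2 + s/8" using nB4 by simp
          then have "(\<Sum>i\<in>{..<n}. Ind a2 i \<omega>) < (a2 + s/8) * real n" using npos by (simp add: pos_divide_less_eq)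
          then show ?thesis unfolding sumc by (simp add: a2_def algebra_simps)
        qed
      qed
      have "\<bar>geninv (G n \<theta> (X n \<omega>)) (emp_quantile (\<lambda>i. G n \<theta> (X i \<omega>) (Yv i \<omega>)) n \<beta>) - geninv (F (X n \<omega>)) \<beta>\<bar> \<le> e"
      proof (rule det_main[OF Fcd Gc _ K _ \<beta> e(1) e(2) dG quant])
        show "\<forall>y. F (X n \<omega>) differentiable at y" using Fdiff xs by blast
        show "\<forall>y. \<bar>y - geninv (F (X n \<omega>)) \<beta>\<bar> < \<delta> \<longrightarrow> 1 / K \<le> deriv (F (X n \<omega>)) y" using sl xs by blast
      qed (use s in \<open>auto simp: d_def\<close>)
      then show False using gt e(3) by (simp add: \<theta>_def)
    qed
  qed
  define bound where "bound n = (\<rho> n + \<eta>' n / c0) + (\<rho> n + \<eta>' n / c1) / (s/8)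
      + exp (-2 * real n * (s/4)\<^sup>2) + exp (-2 * real n * (s/8)\<^sup>2)" for n
  have bnd: "outer_prob M (Bad n) \<le> bound n" if n: "n > 0" for n
  proof -
    have "outer_prob M (Bad n) \<le> measure M (B1 n \<union> B2 n \<union> B3 n \<union> B4 n)"
      by (rule outer_prob_le[OF _ _ key[OF n]]) (auto intro: finite_measure_axioms B1m B2m B3m B4m)
    also have "\<dots> \<le> measure M (B1 n) + measure M (B2 n) + measure M (B3 n) + measure M (B4 n)"
      using measure_Un_le[of "B1 n \<union> B2 n \<union> B3 n" M "B4 n"] measure_Un_le[of "B1 n \<union> B2 n" M "B3 n"]
        measure_Un_le[of "B1 n" M "B2 n"] B1m B2m B3m B4m by auto
    also have "\<dots> \<le> bound n"
    proof -
      have m1: "measure M (B1 n) \<le> \<rho> n + \<eta>' n / c0"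
        using markov_X[of n n c0 "\<eta>' n", OF le_refl c0 \<eta>'0] \<rho>'le[of n] by (simp add: B1_def \<rho>'_def)
      have "measure M (B2 n) \<le> (\<rho>' n + \<eta>' n / c1) / (s/8)"
        using count_markov[of n c1 "\<eta>' n" "s/8", OF n c1 \<eta>'0] s by (simp add: B2_def \<rho>'_def)
      also have "\<dots> \<le> (\<rho> n + \<eta>' n / c1) / (s/8)"
        using \<rho>'le[of n] s by (intro divide_right_mono) auto
      finally have m2: "measure M (B2 n) \<le> (\<rho> n + \<eta>' n / c1) / (s/8)" .
      have m3: "measure M (B3 n) \<le> exp (-2 * real n * (s/4)\<^sup>2)"
        using hoeff(1)[OF Fc a1 n, of "s/4"] s by (simp add: B3_def)
      have m4: "measure M (B4 n) \<le> exp (-2 * real n * (s/8)\<^sup>2)"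
        using hoeff(2)[OF Fc a2 n, of "s/8"] s by (simp add: B4_def)
      show ?thesis using m1 m2 m3 m4 by (simp add: bound_def)
    qed
    finally show ?thesis .
  qed
  have blim: "bound \<longlonglongrightarrow> 0"
  proof -
    have "bound \<longlonglongrightarrow> (0 + 0 / c0) + (0 + 0 / c1) / (s/8) + 0 + 0"
      unfolding bound_def[abs_def]
      by (intro tendsto_add tendsto_divide tendsto_const \<rho> \<eta>'lim exp_lim) (use s c0 c1 in auto)
    then show ?thesis by simp
  qed
  have "(\<lambda>n. outer_prob M (Bad n)) \<longlonglongrightarrow> 0"
  proof (rule tendsto_sandwich[OF _ _ tendsto_const blim])
    show "\<forall>\<^sub>F n in sequentially. 0 \<le> outer_prob M (Bad n)"
      by (intro always_eventually allI outer_prob_nonneg) (auto simp: Bad_def)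
    show "\<forall>\<^sub>F n in sequentially. outer_prob M (Bad n) \<le> bound n"
      unfolding eventually_sequentially by (intro exI[of _ 1]) (auto intro: bnd)
  qed
  then show ?thesis by (simp add: Bad_def)
qed

end

theorem lemma3:
  fixes M :: "'a measure" and SX :: "'x measure" and Z :: "nat \<Rightarrow> 'a \<Rightarrow> 'x \<times> real"
    and F :: "'x \<Rightarrow> real \<Rightarrow> real" and S :: "nat \<Rightarrow> 's measure" and \<Theta> :: "nat \<Rightarrow> 'a \<Rightarrow> 's"
    and G :: "nat \<Rightarrow> 's \<Rightarrow> 'x \<Rightarrow> real \<Rightarrow> real" and \<alpha> :: real
  assumes prob: "prob_space M"
    and iid: "prob_space.indep_vars M (\<lambda>_. SX \<Otimes>\<^sub>M borel) Z UNIV"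
    and ident: "\<forall>i. distr M (SX \<Otimes>\<^sub>M borel) (Z i) = distr M (SX \<Otimes>\<^sub>M borel) (Z 0)"
    and F_cdf: "\<forall>x\<in>space SX. is_cdf (F x)"
    and F_meas: "\<forall>y. (\<lambda>x. F x y) \<in> borel_measurable SX"
    and F_cond: "\<forall>A\<in>sets SX. \<forall>y. measure M {\<omega>\<in>space M. fst (Z 0 \<omega>) \<in> A \<and> snd (Z 0 \<omega>) \<le> y}
                   = (LINT x:A|distr M SX (\<lambda>\<omega>. fst (Z 0 \<omega>)). F x y)"
    and G_meas: "\<forall>n. (\<lambda>(\<theta>, x, y). G n \<theta> x y) \<in> borel_measurable (S n \<Otimes>\<^sub>M (SX \<Otimes>\<^sub>M borel))"
    and G_cdf: "\<forall>n. \<forall>\<theta>\<in>space (S n). \<forall>x\<in>space SX. is_cdf (G n \<theta> x)"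
    and \<Theta>_meas: "\<forall>n. \<Theta> n \<in> measurable M (S n)"
    and indep: "\<forall>n. prob_space.indep_set M (sets (vimage_algebra (space M) (\<Theta> n) (S n)))
                   (sets (vimage_algebra (space M) (\<lambda>\<omega>. \<lambda>i\<in>{..n}. Z i \<omega>)
                      (PiM {..n} (\<lambda>_. SX \<Otimes>\<^sub>M borel))))"
    and \<alpha>: "0 < \<alpha>" "\<alpha> < 1"
    and A1: "\<exists>\<eta> \<rho> :: nat \<Rightarrow> real. \<eta> \<longlonglongrightarrow> 0 \<and> \<rho> \<longlonglongrightarrow> 0 \<and>
              (\<forall>n. outer_prob M {\<omega>\<in>space M. ennreal (\<eta> n) \<le>
                   (\<integral>\<^sup>+ x. (SUP y. ennreal ((G n (\<Theta> n \<omega>) x y - F x y)\<^sup>2))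
                      \<partial>(distr M SX (\<lambda>\<omega>. fst (Z 0 \<omega>))))} \<le> \<rho> n)"
    and A2: "(\<forall>x\<in>space SX. \<forall>y. F x differentiable (at y)) \<and>
             (\<exists>K>0. \<exists>\<delta>>0. \<forall>x\<in>space SX. \<forall>y.
                (\<bar>y - geninv (F x) (\<alpha>/2)\<bar> < \<delta> \<or> \<bar>y - geninv (F x) (1 - \<alpha>/2)\<bar> < \<delta>)
                \<longrightarrow> deriv (F x) y \<ge> 1 / K)"
  shows "(\<forall>\<epsilon>>0. (\<lambda>n. outer_prob M {\<omega>\<in>space M.
            \<bar>geninv (G n (\<Theta> n \<omega>) (fst (Z n \<omega>)))
                (emp_quantile (\<lambda>i. G n (\<Theta> n \<omega>) (fst (Z i \<omega>)) (snd (Z i \<omega>))) n (\<alpha>/2))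
             - geninv (F (fst (Z n \<omega>))) (\<alpha>/2)\<bar> > \<epsilon>}) \<longlonglongrightarrow> 0) \<and>
         (\<forall>\<epsilon>>0. (\<lambda>n. outer_prob M {\<omega>\<in>space M.
            \<bar>geninv (G n (\<Theta> n \<omega>) (fst (Z n \<omega>)))
                (emp_quantile (\<lambda>i. G n (\<Theta> n \<omega>) (fst (Z i \<omega>)) (snd (Z i \<omega>))) n (1 - \<alpha>/2))
             - geninv (F (fst (Z n \<omega>))) (1 - \<alpha>/2)\<bar> > \<epsilon>}) \<longlonglongrightarrow> 0)"
proof -
  interpret setting M SX Z F S \<Theta> G
    by (rule setting.intro) (fact prob iid ident F_cdf F_meas F_cond G_meas G_cdf \<Theta>_meas indep)+
  obtain \<eta> \<rho> :: "nat \<Rightarrow> real" where \<eta>: "\<eta> \<longlonglongrightarrow> 0" and \<rho>: "\<rho> \<longlonglongrightarrow> 0"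
    and A1o: "\<forall>n. outer_prob M {\<omega>\<in>space M. ennreal (\<eta> n) \<le>
                   (\<integral>\<^sup>+ x. (SUP y. ennreal ((G n (\<Theta> n \<omega>) x y - F x y)\<^sup>2))
                      \<partial>(distr M SX (\<lambda>\<omega>. fst (Z 0 \<omega>))))} \<le> \<rho> n"
    using A1 by blast
  have A1': "\<forall>n. outer_prob M {\<omega>\<in>space M. ennreal (\<eta> n) \<le> E\<theta> n (\<Theta> n \<omega>)} \<le> \<rho> n"
    using A1o by (simp add: E\<theta>_def Dsq_def PX_def)
  have Fdiff: "\<forall>x\<in>space SX. \<forall>y. F x differentiable (at y)" using A2 by blast
  obtain K \<delta> where K: "K > 0" and \<delta>: "\<delta> > 0" and sl: "\<forall>x\<in>space SX. \<forall>y.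
                (\<bar>y - geninv (F x) (\<alpha>/2)\<bar> < \<delta> \<or> \<bar>y - geninv (F x) (1 - \<alpha>/2)\<bar> < \<delta>)
                \<longrightarrow> deriv (F x) y \<ge> 1 / K"
    using A2 by blast
  have sl1: "\<forall>x\<in>space SX. \<forall>y. \<bar>y - geninv (F x) (\<alpha>/2)\<bar> < \<delta> \<longrightarrow> deriv (F x) y \<ge> 1/K" using sl by blast
  have sl2: "\<forall>x\<in>space SX. \<forall>y. \<bar>y - geninv (F x) (1 - \<alpha>/2)\<bar> < \<delta> \<longrightarrow> deriv (F x) y \<ge> 1/K" using sl by blast
  have b1: "0 < \<alpha>/2" "\<alpha>/2 < 1" and b2: "0 < 1 - \<alpha>/2" "1 - \<alpha>/2 < 1" using \<alpha> by auto
  show ?thesis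
  proof (intro conjI allI impI)
    fix \<epsilon> :: real assume \<epsilon>: "\<epsilon> > 0"
    from main_level[OF Fdiff K \<delta> sl1 b1 \<eta> \<rho> A1' \<epsilon>]
    show "(\<lambda>n. outer_prob M {\<omega>\<in>space M.
            \<bar>geninv (G n (\<Theta> n \<omega>) (fst (Z n \<omega>)))
                (emp_quantile (\<lambda>i. G n (\<Theta> n \<omega>) (fst (Z i \<omega>)) (snd (Z i \<omega>))) n (\<alpha>/2))
             - geninv (F (fst (Z n \<omega>))) (\<alpha>/2)\<bar> > \<epsilon>}) \<longlonglongrightarrow> 0"
      by (simp add: X_def Yv_def)
  next
    fix \<epsilon> :: real assume \<epsilon>: "\<epsilon> > 0"
    from main_level[OF Fdiff K \<delta> sl2 b2 \<eta> \<rho> A1' \<epsilon>]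
    show "(\<lambda>n. outer_prob M {\<omega>\<in>space M.
            \<bar>geninv (G n (\<Theta> n \<omega>) (fst (Z n \<omega>)))
                (emp_quantile (\<lambda>i. G n (\<Theta> n \<omega>) (fst (Z i \<omega>)) (snd (Z i \<omega>))) n (1 - \<alpha>/2))
             - geninv (F (fst (Z n \<omega>))) (1 - \<alpha>/2)\<bar> > \<epsilon>}) \<longlonglongrightarrow> 0"
      by (simp add: X_def Yv_def)
  qed
qed

end
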